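(* Let $T$ be a tetrahedron satisfying the maximum angle condition with bound $\theta_M<\pi$. Then $T$ has three edges $e_1,e_2,e_3$ (not necessarily sharing a common vertex) such that the matrix $M$ whose columns are the unit direction vectors of these edges satisfies $$|\det(M)|\ge c_m:=\min\{\sqrt3/2,\sin(\theta_M)\}\,\min\{\cos(\theta_M/2),\sin(\theta_M)\}^2,$$ and moreover $$\frac{c_m}{6}|e_1||e_2||e_3|\le|T|\le\frac16|e_1||e_2||e_3|.$$
   Context: A tetrahedron satisfies the maximum angle condition with bound $\theta_M$ if all its dihedral angles and all angles of its triangular faces are at most $\theta_M$. $|e_i|$ is the length of $e_i$, $|T|$ the volume of $T$. *)

theory Defs
  imports "HOL-Analysis.Analysis"
begin

definition vangle :: "real^3 \<Rightarrow> real^3 \<Rightarrow> real" where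
  "vangle u v = arccos ((u \<bullet> v) / (norm u * norm v))"

definition orth_comp :: "real^3 \<Rightarrow> real^3 \<Rightarrow> real^3" where
  "orth_comp w u = w - ((w \<bullet> u) / (u \<bullet> u)) *\<^sub>R u"

definition tetrahedron :: "(nat \<Rightarrow> real^3) \<Rightarrow> bool" where
  "tetrahedron p \<longleftrightarrow> \<not> coplanar {p 0, p 1, p 2, p 3}"

definition face_angle :: "(nat \<Rightarrow> real^3) \<Rightarrow> nat \<Rightarrow> nat \<Rightarrow> nat \<Rightarrow> real" where
  "face_angle p i j k = vangle (p j - p i) (p k - p i)"

text \<open>Dihedral angle along the edge from vertex i to vertex j, between the faces
  {i,j,k} and {i,j,l}: the angle between the components of p k - p i and p l - p i
  orthogonal to the edge.\<close>
definition dihedral_angle :: "(nat \<Rightarrow> real^3) \<Rightarrow> nat \<Rightarrow> nat \<Rightarrow> nat \<Rightarrow> nat \<Rightarrow> real" where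
  "dihedral_angle p i j k l =
     vangle (orth_comp (p k - p i) (p j - p i)) (orth_comp (p l - p i) (p j - p i))"

definition max_angle_condition :: "(nat \<Rightarrow> real^3) \<Rightarrow> real \<Rightarrow> bool" where
  "max_angle_condition p \<theta>M \<longleftrightarrow>
     (\<forall>i<4. \<forall>j<4. \<forall>k<4. distinct [i,j,k] \<longrightarrow> face_angle p i j k \<le> \<theta>M) \<and>
     (\<forall>i<4. \<forall>j<4. \<forall>k<4. \<forall>l<4. distinct [i,j,k,l] \<longrightarrow> dihedral_angle p i j k l \<le> \<theta>M)"

definition is_edge :: "nat \<times> nat \<Rightarrow> bool" where
  "is_edge e \<longleftrightarrow> fst e < snd e \<and> snd e < 4"

definition edge_len :: "(nat \<Rightarrow> real^3) \<Rightarrow> nat \<times> nat \<Rightarrow> real" where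
  "edge_len p e = norm (p (snd e) - p (fst e))"

definition edge_dir :: "(nat \<Rightarrow> real^3) \<Rightarrow> nat \<times> nat \<Rightarrow> real^3" where
  "edge_dir p e = (1 / edge_len p e) *\<^sub>R (p (snd e) - p (fst e))"

definition edge_matrix :: "(nat \<Rightarrow> real^3) \<Rightarrow> nat \<times> nat \<Rightarrow> nat \<times> nat \<Rightarrow> nat \<times> nat \<Rightarrow> real^3^3" where
  "edge_matrix p e1 e2 e3 =
     (\<chi> r c. (if c = 1 then edge_dir p e1 else if c = 2 then edge_dir p e2 else edge_dir p e3) $ r)"

definition tet_volume :: "(nat \<Rightarrow> real^3) \<Rightarrow> real" where
  "tet_volume p = measure lebesgue (convex hull {p 0, p 1, p 2, p 3})"

end

theory Submission
  imports Defs
begin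


definition trip :: "real^3 \<Rightarrow> real^3 \<Rightarrow> real^3 \<Rightarrow> real" where
  "trip u v w = u \<bullet> cross3 v w"

lemma det_cols3:
  "det (\<chi> r c. (if c = 1 then u else if c = 2 then v else w) $ r :: real^3^3) = trip u v w"
  unfolding trip_def by (simp add: det_3 cross3_def inner_vec_def sum_3 algebra_simps)

lemma cross_cross_same: "cross3 (cross3 e x) (cross3 e y) = trip e x y *\<^sub>R e"
  unfolding trip_def by (simp add: cross3_simps forall_3)

lemma cross_dot_cross: "cross3 a b \<bullet> cross3 c d = (a \<bullet> c) * (b \<bullet> d) - (a \<bullet> d) * (b \<bullet> c)"
  by (simp add: cross3_simps forall_3)

lemma cross_cross_left: "cross3 e (cross3 e x) = (e \<bullet> x) *\<^sub>R e - (e \<bullet> e) *\<^sub>R x"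
  by (simp add: cross3_simps forall_3)

lemma trip_scale: "trip (a *\<^sub>R u) (b *\<^sub>R v) (c *\<^sub>R w) = a * b * c * trip u v w"
  unfolding trip_def by (simp add: cross_mult_left cross_mult_right)

lemma trip_swap12: "trip u v w = - trip v u w" unfolding trip_def by (simp add: cross3_simps forall_3)
lemma trip_swap23: "trip u v w = - trip u w v" unfolding trip_def by (simp add: cross3_simps forall_3)
lemma trip_add: "trip u v (w + t *\<^sub>R v) = trip u v w" "trip u (v + t *\<^sub>R u) w = trip u v w"
  unfolding trip_def by (simp_all add: cross3_simps forall_3)

lemma cross_sub_self [simp]: "cross3 u (v - u) = cross3 u v" "cross3 (v - u) u = cross3 v u"
  by (simp_all add: cross3_simps forall_3)


lemma l1: fixes c x a b :: real assumes "c \<noteq> 0" shows "c * (c * x) / (\<bar>c\<bar> * a * (\<bar>c\<bar> * b)) = x / (a * b)"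
proof -
  have h: "\<bar>c\<bar> * a * (\<bar>c\<bar> * b) = c * (c * (a * b))" by (simp add: algebra_simps abs_mult_self_eq)
  show ?thesis unfolding h using assms by simp
qed
lemma l2: assumes "- 1 \<le> (t::real) \<and> t \<le> 1" shows "sin (arccos t) = sqrt (1 - t\<^sup>2)"
  using assms by (subst sin_arccos_abs) (auto simp: abs_le_iff)

lemma vangle_ratio_bounds: "- 1 \<le> (u \<bullet> v) / (norm u * norm v) \<and> (u \<bullet> v) / (norm u * norm v) \<le> 1"
proof (cases "norm u * norm v = 0")
  case True then show ?thesis by auto
next
  case False
  then have p: "norm u * norm v > 0" by (simp add: less_le)
  have "\<bar>u \<bullet> v\<bar> \<le> norm u * norm v" by (rule Cauchy_Schwarz_ineq2)
  then show ?thesis using p by (simp add: divide_le_eq le_divide_eq abs_le_iff)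
qed

lemma vangle_bounds: "0 \<le> vangle u v" "vangle u v \<le> pi"
  unfolding vangle_def using vangle_ratio_bounds arccos_bounded by auto

lemma cos_vangle: "cos (vangle u v) = (u \<bullet> v) / (norm u * norm v)"
  unfolding vangle_def using vangle_ratio_bounds[of u v] by simp

lemma sin_vangle:
  assumes "u \<noteq> 0" "v \<noteq> 0"
  shows "sin (vangle u v) = norm (cross3 u v) / (norm u * norm v)"
proof -
  have p: "norm u * norm v > 0" using assms by simp
  have "sin (vangle u v) = sqrt (1 - ((u \<bullet> v) / (norm u * norm v))\<^sup>2)"
    unfolding vangle_def using vangle_ratio_bounds[of u v] by (rule l2)
  also have "1 - ((u \<bullet> v) / (norm u * norm v))\<^sup>2 = (norm (cross3 u v) / (norm u * norm v))\<^sup>2"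
  proof -
    have "(norm (cross3 u v) / (norm u * norm v))\<^sup>2 + ((u \<bullet> v) / (norm u * norm v))\<^sup>2 = 1"
      using p assms by (simp add: power_divide add_divide_distrib[symmetric] norm_cross_dot)
    then show ?thesis by linarith
  qed
  also have "sqrt \<dots> = norm (cross3 u v) / (norm u * norm v)" using p by simp
  finally show ?thesis .
qed

lemma sin_vangle_nonneg: "0 \<le> sin (vangle u v)"
  using vangle_bounds sin_ge_zero by auto

lemma vangle_scale: "c \<noteq> 0 \<Longrightarrow> vangle (c *\<^sub>R u) (c *\<^sub>R v) = vangle u v"
  unfolding vangle_def by (simp add: l1)

lemma vangle_cross_perp:
  assumes "e \<bullet> P = 0" "e \<bullet> Q = 0" "e \<noteq> 0"
  shows "vangle (cross3 e P) (cross3 e Q) = vangle P Q"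
proof -
  have n: "norm (cross3 e R) = norm e * norm R" if "e \<bullet> R = 0" for R
    using norm_cross_dot[of e R] that
    by (metis add.right_neutral norm_ge_zero power2_eq_iff_nonneg zero_le_mult_iff zero_power2)
  have i: "cross3 e P \<bullet> cross3 e Q = (norm e)\<^sup>2 * (P \<bullet> Q)"
    using assms by (simp add: cross_dot_cross power2_norm_eq_inner)
  show ?thesis unfolding vangle_def using assms n i
    by (simp add: power2_eq_square field_simps)
qed

lemma dihedral_vangle:
  assumes "p j \<noteq> p i"
  shows "dihedral_angle p i j k l =
    vangle (cross3 (p j - p i) (p k - p i)) (cross3 (p j - p i) (p l - p i))"
proof -
  define e where "e = p j - p i"
  have e0: "e \<noteq> 0" using assms by (simp add: e_def)
  have oc: "orth_comp x e = (- 1 / (e \<bullet> e)) *\<^sub>R cross3 e (cross3 e x)" for x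
    using e0 unfolding orth_comp_def cross_cross_left
    by (simp add: algebra_simps inner_commute)
  have c0: "- 1 / (e \<bullet> e) \<noteq> 0" using e0 by simp
  have "dihedral_angle p i j k l = vangle (cross3 e (cross3 e (p k - p i))) (cross3 e (cross3 e (p l - p i)))"
    unfolding dihedral_angle_def e_def[symmetric] oc by (rule vangle_scale[OF c0])
  also have "\<dots> = vangle (cross3 e (p k - p i)) (cross3 e (p l - p i))"
    using e0 by (simp add: vangle_cross_perp dot_cross_self)
  finally show ?thesis by (simp add: e_def)
qed



lemma sin_between:
  assumes "0 \<le> a" "a \<le> x" "x \<le> b" "b \<le> pi"
  shows "min (sin a) (sin b) \<le> sin x"
proof (cases "x \<le> pi / 2")
  case True
  then have "sin a \<le> sin x" using assms by (intro sin_monotone_2pi_le) auto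
  then show ?thesis by simp
next
  case False
  then have "sin (pi - b) \<le> sin (pi - x)" using assms by (intro sin_monotone_2pi_le) auto
  then show ?thesis by simp
qed

lemma triangle_sum:
  assumes nz: "cross3 u v \<noteq> 0"
  shows "vangle u v + vangle (- u) (v - u) + vangle (- v) (u - v) = pi"
proof -
  have u0: "u \<noteq> 0" and v0: "v \<noteq> 0" and w0: "v - u \<noteq> 0" using nz by auto
  define a where "a = norm u"
  define b where "b = norm v"
  define c where "c = norm (v - u)"
  define d where "d = u \<bullet> v"
  define N where "N = norm (cross3 u v)"
  have a0: "a > 0" and b0: "b > 0" and c0: "c > 0" and N0: "N > 0"
    using u0 v0 w0 nz by (auto simp: a_def b_def c_def N_def)
  have NN: "N * N = a * a * (b * b) - d * d"
    using norm_cross_dot[of u v] unfolding N_def a_def b_def d_def by (simp add: power2_eq_square algebra_simps)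
  have uu: "u \<bullet> u = a * a" by (simp add: a_def power2_norm_eq_inner[symmetric] power2_eq_square)
  have vv: "v \<bullet> v = b * b" by (simp add: b_def power2_norm_eq_inner[symmetric] power2_eq_square)
  define A where "A = vangle u v"
  define B where "B = vangle (- u) (v - u)"
  define C where "C = vangle (- v) (u - v)"
  have cA: "cos A = d / (a * b)" unfolding A_def cos_vangle a_def b_def d_def ..
  have sA: "sin A = N / (a * b)" unfolding A_def using u0 v0 by (simp add: sin_vangle a_def b_def N_def)
  have cB: "cos B = (a * a - d) / (a * c)" unfolding B_def cos_vangle
    by (simp add: a_def c_def d_def inner_diff_right uu)
  have crB: "cross3 (- u) (v - u) = - cross3 u v" by (simp add: cross3_simps forall_3)
  have sB: "sin B = N / (a * c)" unfolding B_def using u0 w0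
    by (simp add: sin_vangle crB a_def c_def N_def)
  have cC: "cos C = (b * b - d) / (b * c)" unfolding C_def cos_vangle
    by (simp add: b_def c_def d_def inner_diff_right vv norm_minus_commute inner_commute)
  have cAB: "cos (A + B) = - cos C"
    unfolding cos_add cA cB sA sB cC using a0 b0 c0 NN
    by (simp add: field_simps) algebra
  have sAB: "sin (A + B) = N / (b * c)"
    unfolding sin_add cA cB sA sB using a0 b0 c0
    by (simp add: field_simps)
  have Ab: "0 \<le> A" "A \<le> pi" "0 \<le> B" "B \<le> pi" "0 \<le> C" "C \<le> pi"
    unfolding A_def B_def C_def using vangle_bounds by auto
  have "A + B < pi"
  proof (rule ccontr)
    assume "\<not> A + B < pi"
    then have "0 \<le> sin (A + B - pi)" using Ab by (intro sin_ge_zero) auto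
    moreover have "sin (A + B - pi) = - sin (A + B)" by (simp add: sin_diff)
    moreover have "sin (A + B) > 0" unfolding sAB using N0 b0 c0 by simp
    ultimately show False by simp
  qed
  have "A + B = arccos (cos (A + B))" using Ab \<open>A + B < pi\<close> by (simp add: arccos_cos)
  also have "cos (A + B) = cos (pi - C)" using cAB by simp
  also have "arccos (cos (pi - C)) = pi - C" using Ab by (intro arccos_cos) auto
  finally show ?thesis unfolding A_def B_def C_def by simp
qed



lemma cols3_mult: "(\<chi> r c. (if c = 1 then u else if c = 2 then v else w) $ r :: real^3^3) *v x
   = x$1 *\<^sub>R u + x$2 *\<^sub>R v + x$3 *\<^sub>R w"
  by (simp add: vec_eq_iff matrix_vector_mult_def sum_3 forall_3 algebra_simps)

lemma coplanar_dep:
  fixes q0 q1 q2 q3 :: "real^3"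
  assumes "\<alpha> \<noteq> 0" "\<alpha> *\<^sub>R (q1 - q0) + \<beta> *\<^sub>R (q2 - q0) + \<gamma> *\<^sub>R (q3 - q0) = 0"
  shows "coplanar {q0, q1, q2, q3}"
proof -
  have "q1 = (1 + \<beta>/\<alpha> + \<gamma>/\<alpha>) *\<^sub>R q0 + (- \<beta>/\<alpha>) *\<^sub>R q2 + (- \<gamma>/\<alpha>) *\<^sub>R q3"
  proof -
    have "(1/\<alpha>) *\<^sub>R (\<alpha> *\<^sub>R (q1 - q0) + \<beta> *\<^sub>R (q2 - q0) + \<gamma> *\<^sub>R (q3 - q0)) = 0"
      using assms by simp
    then have "q1 - q0 + (\<beta>/\<alpha>) *\<^sub>R (q2 - q0) + (\<gamma>/\<alpha>) *\<^sub>R (q3 - q0) = 0"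
      using assms(1) by (simp add: scaleR_add_right)
    then show ?thesis by (simp add: algebra_simps)
  qed
  then have "q1 \<in> affine hull {q0, q2, q3}"
    unfolding affine_hull_3 by (rule_tac CollectI, rule_tac x="1 + \<beta>/\<alpha> + \<gamma>/\<alpha>" in exI,
        rule_tac x="- \<beta>/\<alpha>" in exI, rule_tac x="- \<gamma>/\<alpha>" in exI) (simp add: algebra_simps)
  then have "{q0, q1, q2, q3} \<subseteq> affine hull {q0, q2, q3}"
    using hull_subset[of "{q0, q2, q3}" affine] by auto
  then show ?thesis unfolding coplanar_def by blast
qed

lemma tet_trip_nz:
  assumes "tetrahedron p"
  shows "trip (p 1 - p 0) (p 2 - p 0) (p 3 - p 0) \<noteq> 0"
proof
  assume "trip (p 1 - p 0) (p 2 - p 0) (p 3 - p 0) = 0"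
  then have "det (\<chi> r c. (if c = 1 then p 1 - p 0 else if c = 2 then p 2 - p 0 else p 3 - p 0) $ r :: real^3^3) = 0"
    by (simp add: det_cols3)
  then have "rank (\<chi> r c. (if c = 1 then p 1 - p 0 else if c = 2 then p 2 - p 0 else p 3 - p 0) $ r :: real^3^3) \<noteq> CARD(3)"
    unfolding det_eq_0_rank by simp
  then obtain x :: "real^3" where x0: "x \<noteq> 0" and
    "(\<chi> r c. (if c = 1 then p 1 - p 0 else if c = 2 then p 2 - p 0 else p 3 - p 0) $ r :: real^3^3) *v x = 0"
    unfolding matrix_nonfull_linear_equations_eq[symmetric] by blast
  then have x: "x \<noteq> 0"
    "x$1 *\<^sub>R (p 1 - p 0) + x$2 *\<^sub>R (p 2 - p 0) + x$3 *\<^sub>R (p 3 - p 0) = 0"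
    unfolding cols3_mult by auto
  have "coplanar {p 0, p 1, p 2, p 3}"
  proof -
    consider "x$1 \<noteq> 0" | "x$2 \<noteq> 0" | "x$3 \<noteq> 0" using x(1) by (auto simp: vec_eq_iff forall_3)
    then show ?thesis
    proof cases
      case 1 then show ?thesis using coplanar_dep[OF 1 x(2)] by simp
    next
      case 2
      have h: "x$2 *\<^sub>R (p 2 - p 0) + x$1 *\<^sub>R (p 1 - p 0) + x$3 *\<^sub>R (p 3 - p 0) = 0"
        using x(2) by (simp add: algebra_simps)
      have "{p 0, p 2, p 1, p 3} = {p 0, p 1, p 2, p 3}" by blast
      with coplanar_dep[OF 2 h] show ?thesis by simp
    next
      case 3
      have h: "x$3 *\<^sub>R (p 3 - p 0) + x$1 *\<^sub>R (p 1 - p 0) + x$2 *\<^sub>R (p 2 - p 0) = 0"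
        using x(2) by (simp add: algebra_simps)
      have "{p 0, p 3, p 1, p 2} = {p 0, p 1, p 2, p 3}" by blast
      with coplanar_dep[OF 3 h] show ?thesis by simp
    qed
  qed
  then show False using assms unfolding tetrahedron_def by simp
qed



lemma tet_distinct:
  assumes "trip (p 1 - p 0) (p 2 - p 0) (p 3 - p 0) \<noteq> 0"
  shows "p 0 \<noteq> p 1" "p 0 \<noteq> p 2" "p 0 \<noteq> p 3" "p 1 \<noteq> p 2" "p 1 \<noteq> p 3" "p 2 \<noteq> p 3"
  using assms by (auto simp: trip_def dot_cross_self)

lemma tet_volume_eq:
  assumes nz: "trip (p 1 - p 0) (p 2 - p 0) (p 3 - p 0) \<noteq> 0"
  shows "tet_volume p = \<bar>trip (p 1 - p 0) (p 2 - p 0) (p 3 - p 0)\<bar> / 6"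
proof -
  note d = tet_distinct[OF nz]
  define X where "X = {p 0, p 1, p 2, p 3}"
  define f where "f = (\<lambda>j::3. if j = 1 then p 1 else if j = 2 then p 2 else p 3)"
  have fin: "finite X" by (simp add: X_def)
  have card: "card X = Suc CARD(3)" using d by (simp add: X_def)
  have x0: "p 0 \<in> X" by (simp add: X_def)
  have bij: "bij_betw f UNIV (X - {p 0})"
  proof (rule bij_betwI')
    show "f x = f y \<longleftrightarrow> x = y" for x y :: 3
      using d exhaust_3[of x] exhaust_3[of y] by (auto simp: f_def)
    show "f x \<in> X - {p 0}" for x :: 3
      using d exhaust_3[of x] by (auto simp: f_def X_def)
    show "\<exists>x\<in>UNIV. y = f x" if "y \<in> X - {p 0}" for y
    proof -
      have "y = p 1 \<or> y = p 2 \<or> y = p 3" using that by (auto simp: X_def)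
      moreover have "f 1 = p 1" "f 2 = p 2" "f 3 = p 3" by (simp_all add: f_def)
      ultimately show ?thesis by (metis UNIV_I)
    qed
  qed
  have M: "(\<chi> i j. f j $ i - p 0 $ i) =
     (\<chi> r c. (if c = 1 then p 1 - p 0 else if c = 2 then p 2 - p 0 else p 3 - p 0) $ r :: real^3^3)"
    by (simp add: vec_eq_iff f_def)
  have "measure lborel (convex hull X) = \<bar>trip (p 1 - p 0) (p 2 - p 0) (p 3 - p 0)\<bar> / 6"
  proof -
    have f3: "(fact 3 :: real) = 6" by (simp add: numeral_3_eq_3)
    show ?thesis using content_simplex[OF fin card x0 bij] unfolding M det_cols3 by (simp add: f3)
  qed
  moreover have "measure lebesgue (convex hull X) = measure lborel (convex hull X)"
    using finite_imp_compact_convex_hull[OF fin]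
    by (intro measure_completion) (auto dest: compact_imp_closed)
  ultimately show ?thesis unfolding tet_volume_def X_def by simp
qed



lemma trip_perm_aux:
  fixes a b c d :: "real^3"
  shows "trip (b - a) (c - a) (d - a) = trip (b - a) (c - a) (d - a)"
    "trip (c - a) (b - a) (d - a) = - trip (b - a) (c - a) (d - a)"
    "trip (b - a) (d - a) (c - a) = - trip (b - a) (c - a) (d - a)"
    "trip (a - b) (c - b) (d - b) = - trip (b - a) (c - a) (d - a)"
  unfolding trip_def by (simp_all add: cross3_simps forall_3)

lemma trip_perm:
  fixes p :: "nat \<Rightarrow> real^3" and i j k l :: nat
  assumes "i < 4" "j < 4" "k < 4" "l < 4" "distinct [i, j, k, l]"
  shows "\<bar>trip (p j - p i) (p k - p i) (p l - p i)\<bar> = \<bar>trip (p 1 - p 0) (p 2 - p 0) (p 3 - p 0)\<bar>"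
proof -
  have "i \<in> {0,1,2,3}" "j \<in> {0,1,2,3}" "k \<in> {0,1,2,3}" "l \<in> {0,1,2,3}" using assms(1-4) by auto
  then show ?thesis using assms(5)
    by (auto simp: trip_def cross3_simps forall_3 abs_if)
qed



lemma vangle_ge_pi3:
  assumes "(P \<bullet> Q) / (norm P * norm Q) \<le> 1 / 2"
  shows "pi / 3 \<le> vangle P Q"
proof -
  have "arccos (1/2) \<le> arccos ((P \<bullet> Q) / (norm P * norm Q))"
    using assms vangle_ratio_bounds[of P Q] by (intro arccos_le_arccos) auto
  moreover have "arccos (1/2) = pi / 3"
    using arccos_cos[of "pi/3"] by (simp add: cos_60)
  ultimately show ?thesis unfolding vangle_def by simp
qed

lemma ratio_unit: "(P \<bullet> Q) / (norm P * norm Q) = (P /\<^sub>R norm P) \<bullet> (Q /\<^sub>R norm Q)"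
  by (simp add: field_simps)

lemma exists_big_dihedral:
  fixes p :: "nat \<Rightarrow> real^3"
  assumes nz: "trip (p 1 - p 0) (p 2 - p 0) (p 3 - p 0) \<noteq> 0"
  shows "\<exists>i j k l. i < 4 \<and> j < 4 \<and> k < 4 \<and> l < 4 \<and> distinct [i, j, k, l] \<and>
           pi / 3 \<le> dihedral_angle p i j k l"
proof (rule ccontr)
  assume H: "\<not> ?thesis"
  note d = tet_distinct[OF nz]
  define a where "a = p 1 - p 0"
  define b where "b = p 2 - p 0"
  define c where "c = p 3 - p 0"
  define A where "A = cross3 a b"
  define B where "B = cross3 b c"
  define C where "C = cross3 c a"
  define W where "W = A + B + C"
  define V where "V = trip a b c"
  have V0: "V \<noteq> 0" using nz by (simp add: V_def a_def b_def c_def)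
  have "A \<bullet> c = V" "B \<bullet> a = V" "C \<bullet> b = V" "W \<bullet> a = V"
    unfolding A_def B_def C_def W_def V_def trip_def by (simp_all add: cross3_simps)
  then have A0: "A \<noteq> 0" and B0: "B \<noteq> 0" and C0: "C \<noteq> 0" and W0: "W \<noteq> 0"
    using V0 by auto
  define nA where "nA = A /\<^sub>R norm A"
  define nB where "nB = B /\<^sub>R norm B"
  define nC where "nC = C /\<^sub>R norm C"
  define nW where "nW = W /\<^sub>R norm W"
  have un: "nA \<bullet> nA = 1" "nB \<bullet> nB = 1" "nC \<bullet> nC = 1" "nW \<bullet> nW = 1"
    using A0 B0 C0 W0 by (simp_all add: nA_def nB_def nC_def nW_def inner_commute
        power2_norm_eq_inner[symmetric] power2_eq_square)
  have small: "(P \<bullet> Q) / (norm P * norm Q) > 1 / 2"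
    if "i < 4" "j < 4" "k < 4" "l < 4" "distinct [i, j, k, l]" "p j \<noteq> p i"
       "P = cross3 (p j - p i) (p k - p i)" "Q = cross3 (p j - p i) (p l - p i)" for i j k l P Q
  proof -
    have "\<not> pi / 3 \<le> dihedral_angle p i j k l" using H that(1-5) by blast
    then have "\<not> pi / 3 \<le> vangle P Q" using that(6-8) dihedral_vangle by metis
    then show ?thesis using vangle_ge_pi3 by force
  qed
  have e1: "cross3 (p 1 - p 0) (p 2 - p 0) = A" "cross3 (p 1 - p 0) (p 3 - p 0) = - C"
    unfolding A_def C_def a_def b_def c_def by (simp_all add: cross3_simps forall_3)
  have e2: "cross3 (p 2 - p 0) (p 1 - p 0) = - A" "cross3 (p 2 - p 0) (p 3 - p 0) = B"
    unfolding A_def B_def a_def b_def c_def by (simp_all add: cross3_simps forall_3)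
  have e3: "cross3 (p 3 - p 0) (p 1 - p 0) = C" "cross3 (p 3 - p 0) (p 2 - p 0) = - B"
    unfolding C_def B_def a_def b_def c_def by (simp_all add: cross3_simps forall_3)
  have e4: "cross3 (p 2 - p 1) (p 0 - p 1) = A" "cross3 (p 2 - p 1) (p 3 - p 1) = W"
    unfolding W_def A_def B_def C_def a_def b_def c_def by (simp_all add: cross3_simps forall_3)
  have e5: "cross3 (p 3 - p 1) (p 0 - p 1) = - C" "cross3 (p 3 - p 1) (p 2 - p 1) = - W"
    unfolding W_def A_def B_def C_def a_def b_def c_def by (simp_all add: cross3_simps forall_3)
  have e6: "cross3 (p 3 - p 2) (p 0 - p 2) = B" "cross3 (p 3 - p 2) (p 1 - p 2) = W"
    unfolding W_def A_def B_def C_def a_def b_def c_def by (simp_all add: cross3_simps forall_3)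
  have r1: "- (nA \<bullet> nC) > 1/2"
    using small[of 0 1 2 3 A "- C"] d e1 by (simp add: ratio_unit nA_def nC_def)
  have r2: "- (nA \<bullet> nB) > 1/2"
    using small[of 0 2 1 3 "- A" B] d e2 by (simp add: ratio_unit nA_def nB_def)
  have r3: "- (nC \<bullet> nB) > 1/2"
    using small[of 0 3 1 2 C "- B"] d e3 by (simp add: ratio_unit nC_def nB_def)
  have r4: "nA \<bullet> nW > 1/2"
    using small[of 1 2 0 3 A W] d e4 by (simp add: ratio_unit nA_def nW_def)
  have r5: "nC \<bullet> nW > 1/2"
    using small[of 1 3 0 2 "- C" "- W"] d e5 by (simp add: ratio_unit nC_def nW_def)
  have r6: "nB \<bullet> nW > 1/2"
    using small[of 2 3 0 1 B W] d e6 by (simp add: ratio_unit nB_def nW_def)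
  have "0 \<le> (nW - nA - nB - nC) \<bullet> (nW - nA - nB - nC)" by simp
  also have "\<dots> = nW \<bullet> nW + nA \<bullet> nA + nB \<bullet> nB + nC \<bullet> nC
      - 2 * (nA \<bullet> nW) - 2 * (nB \<bullet> nW) - 2 * (nC \<bullet> nW)
      + 2 * (nA \<bullet> nB) + 2 * (nA \<bullet> nC) + 2 * (nC \<bullet> nB)"
    by (simp add: inner_diff_left inner_diff_right inner_commute algebra_simps)
  finally show False using un r1 r2 r3 r4 r5 r6 by linarith
qed



definition ed :: "nat \<Rightarrow> nat \<Rightarrow> nat \<times> nat" where
  "ed a b = (min a b, max a b)"

lemma is_edge_ed: "a \<noteq> b \<Longrightarrow> a < 4 \<Longrightarrow> b < 4 \<Longrightarrow> is_edge (ed a b)"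
  by (auto simp: is_edge_def ed_def min_def max_def)

lemma edge_len_ed: "edge_len p (ed a b) = norm (p b - p a)"
  by (auto simp: edge_len_def ed_def min_def max_def norm_minus_commute)

lemma edge_dir_ed: "a \<noteq> b \<Longrightarrow>
  edge_dir p (ed a b) = ((if a < b then 1 else - 1) / norm (p b - p a)) *\<^sub>R (p b - p a)"
  by (auto simp: edge_dir_def edge_len_def ed_def min_def max_def norm_minus_commute
      scaleR_minus_right[symmetric])

lemma abs_det_ed:
  assumes "a1 \<noteq> b1" "a2 \<noteq> b2" "a3 \<noteq> b3"
  shows "\<bar>det (edge_matrix p (ed a1 b1) (ed a2 b2) (ed a3 b3))\<bar> =
    \<bar>trip (p b1 - p a1) (p b2 - p a2) (p b3 - p a3)\<bar> /
      (norm (p b1 - p a1) * norm (p b2 - p a2) * norm (p b3 - p a3))"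
  unfolding edge_matrix_def det_cols3 using assms
  by (simp add: edge_dir_ed trip_scale abs_mult)

lemma finish:
  fixes p :: "nat \<Rightarrow> real^3"
  assumes "a1 \<noteq> b1" "a2 \<noteq> b2" "a3 \<noteq> b3" "a1 < 4" "b1 < 4" "a2 < 4" "b2 < 4" "a3 < 4" "b3 < 4"
    and dis: "distinct [ed a1 b1, ed a2 b2, ed a3 b3]"
    and hu: "p b1 - p a1 = u1" "p b2 - p a2 = u2" "p b3 - p a3 = u3"
    and vol: "tet_volume p = \<bar>trip u1 u2 u3\<bar> / 6"
    and dl: "\<bar>trip u1 u2 u3\<bar> / (norm u1 * norm u2 * norm u3) = f1 * f2 * f3"
    and nz: "u1 \<noteq> 0" "u2 \<noteq> 0" "u3 \<noteq> 0"
    and bd: "0 \<le> s" "s \<le> f1" "f1 \<le> 1" "0 \<le> m" "m \<le> f2" "f2 \<le> 1" "m \<le> f3" "f3 \<le> 1"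
  shows "\<exists>e1 e2 e3. is_edge e1 \<and> is_edge e2 \<and> is_edge e3 \<and> distinct [e1, e2, e3] \<and>
     (let cm = s * m\<^sup>2 in
       \<bar>det (edge_matrix p e1 e2 e3)\<bar> \<ge> cm \<and>
       cm / 6 * (edge_len p e1 * edge_len p e2 * edge_len p e3) \<le> tet_volume p \<and>
       tet_volume p \<le> 1 / 6 * (edge_len p e1 * edge_len p e2 * edge_len p e3))"
proof (intro exI conjI)
  show "is_edge (ed a1 b1)" "is_edge (ed a2 b2)" "is_edge (ed a3 b3)"
    using assms by (simp_all add: is_edge_ed)
  show "distinct [ed a1 b1, ed a2 b2, ed a3 b3]" by (rule dis)
  define L where "L = norm u1 * norm u2 * norm u3"
  have L0: "L > 0" using nz by (simp add: L_def)
  define \<delta> where "\<delta> = f1 * f2 * f3"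
  have det: "\<bar>det (edge_matrix p (ed a1 b1) (ed a2 b2) (ed a3 b3))\<bar> = \<delta>"
    using abs_det_ed[OF assms(1-3), of p] dl unfolding hu by (simp add: \<delta>_def)
  have lens: "edge_len p (ed a1 b1) * edge_len p (ed a2 b2) * edge_len p (ed a3 b3) = L"
    by (simp add: edge_len_ed L_def hu)
  have q: "\<bar>trip u1 u2 u3\<bar> / L = \<delta>"
    using dl by (simp add: L_def \<delta>_def)
  have "\<bar>trip u1 u2 u3\<bar> = \<delta> * L"
    using q L0 by (simp add: divide_eq_eq)
  then have v: "tet_volume p = \<delta> * L / 6" using vol by simp
  have lo: "s * m\<^sup>2 \<le> \<delta>"
  proof -
    have "m * m \<le> f2 * f3" using bd by (intro mult_mono) auto
    then have "s * (m * m) \<le> f1 * (f2 * f3)" using bd by (intro mult_mono) auto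
    then show ?thesis by (simp add: \<delta>_def power2_eq_square mult.assoc)
  qed
  have hi: "\<delta> \<le> 1"
  proof -
    have "f2 * f3 \<le> 1 * 1" using bd by (intro mult_mono) auto
    then have "f1 * (f2 * f3) \<le> 1 * 1" using bd by (intro mult_mono) auto
    then show ?thesis by (simp add: \<delta>_def mult.assoc)
  qed
  show "let cm = s * m\<^sup>2 in
       \<bar>det (edge_matrix p (ed a1 b1) (ed a2 b2) (ed a3 b3))\<bar> \<ge> cm \<and>
       cm / 6 * (edge_len p (ed a1 b1) * edge_len p (ed a2 b2) * edge_len p (ed a3 b3)) \<le> tet_volume p \<and>
       tet_volume p \<le> 1 / 6 * (edge_len p (ed a1 b1) * edge_len p (ed a2 b2) * edge_len p (ed a3 b3))"
    unfolding Let_def det lens v using lo hi L0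
    by (auto intro: mult_right_mono simp: field_simps)
qed

lemma trip_identities:
  "trip (- e) (x - e) (y - e) = - trip e x y"
  "trip (- x) e (y - e) = trip e x y"
  "trip (- y) e (x - e) = - trip e x y"
  "trip e x y = cross3 e x \<bullet> y"
  "trip e x y = - (cross3 e y \<bullet> x)"
  unfolding trip_def by (simp_all add: cross3_simps forall_3)



lemma face_choice:
  assumes sum: "F1 + F2 + F3 = pi" and b: "F1 \<le> \<theta>" "F2 \<le> \<theta>" "F3 \<le> \<theta>" "0 \<le> F1" "0 \<le> F2"
    and th: "\<theta> < pi"
  shows "min (cos (\<theta> / 2)) (sin \<theta>) \<le> sin F1 \<or> min (cos (\<theta> / 2)) (sin \<theta>) \<le> sin F2"
proof -
  have cs: "sin ((pi - \<theta>) / 2) = cos (\<theta> / 2)"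
    using cos_sin_eq[of "\<theta> / 2"] by (simp add: diff_divide_distrib)
  have "(pi - \<theta>) / 2 \<le> F1 \<or> (pi - \<theta>) / 2 \<le> F2"
  proof (rule ccontr)
    assume "\<not> ?thesis"
    then have "F1 < (pi - \<theta>) / 2" "F2 < (pi - \<theta>) / 2" by auto
    then show False using sum b by (simp add: field_simps)
  qed
  then show ?thesis
  proof
    assume h: "(pi - \<theta>) / 2 \<le> F1"
    have "min (sin ((pi - \<theta>) / 2)) (sin \<theta>) \<le> sin F1"
      using h b th by (intro sin_between) auto
    then show ?thesis unfolding cs by simp
  next
    assume h: "(pi - \<theta>) / 2 \<le> F2"
    have "min (sin ((pi - \<theta>) / 2)) (sin \<theta>) \<le> sin F2"
      using h b th by (intro sin_between) auto
    then show ?thesis unfolding cs by simp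
  qed
qed

lemma edge_case:
  fixes p :: "nat \<Rightarrow> real^3" and \<theta>M :: real and i j k l :: nat
  assumes nz: "trip (p 1 - p 0) (p 2 - p 0) (p 3 - p 0) \<noteq> 0"
    and mac: "max_angle_condition p \<theta>M" and th: "\<theta>M < pi"
    and idx: "i < 4" "j < 4" "k < 4" "l < 4" "distinct [i, j, k, l]"
    and big: "pi / 3 \<le> dihedral_angle p i j k l"
  shows "\<exists>e1 e2 e3. is_edge e1 \<and> is_edge e2 \<and> is_edge e3 \<and> distinct [e1, e2, e3] \<and>
     (let cm = min (sqrt 3 / 2) (sin \<theta>M) * (min (cos (\<theta>M / 2)) (sin \<theta>M))\<^sup>2 in
       \<bar>det (edge_matrix p e1 e2 e3)\<bar> \<ge> cm \<and>
       cm / 6 * (edge_len p e1 * edge_len p e2 * edge_len p e3) \<le> tet_volume p \<and>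
       tet_volume p \<le> 1 / 6 * (edge_len p e1 * edge_len p e2 * edge_len p e3))"
proof -
  define e where "e = p j - p i"
  define x where "x = p k - p i"
  define y where "y = p l - p i"
  define T where "T = trip e x y"
  have TV: "\<bar>T\<bar> = \<bar>trip (p 1 - p 0) (p 2 - p 0) (p 3 - p 0)\<bar>"
    using trip_perm[OF idx] by (simp add: T_def e_def x_def y_def)
  have vol: "tet_volume p = \<bar>T\<bar> / 6" using tet_volume_eq[OF nz] TV by simp
  have T0: "T \<noteq> 0" using nz TV by auto
  have ex0: "cross3 e x \<noteq> 0" using T0 trip_identities(4)[of e x y] by (auto simp: T_def)
  have ey0: "cross3 e y \<noteq> 0" using T0 trip_identities(5)[of e x y] by (auto simp: T_def)
  have e0: "e \<noteq> 0" and x0: "x \<noteq> 0" and y0: "y \<noteq> 0" using ex0 ey0 by auto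
  have xe0: "x - e \<noteq> 0" using ex0 by auto
  have ye0: "y - e \<noteq> 0" using ey0 by auto
  have fa: "face_angle p a b c \<le> \<theta>M" if "a < 4" "b < 4" "c < 4" "distinct [a, b, c]" for a b c
    using mac that unfolding max_angle_condition_def by blast
  have da: "dihedral_angle p i j k l \<le> \<theta>M"
    using mac idx unfolding max_angle_condition_def by blast
  define D where "D = dihedral_angle p i j k l"
  have Dv: "D = vangle (cross3 e x) (cross3 e y)"
    unfolding D_def e_def x_def y_def using e0 by (intro dihedral_vangle) (simp add: e_def)
  have sD: "sin D = \<bar>T\<bar> * norm e / (norm (cross3 e x) * norm (cross3 e y))"
    unfolding Dv using ex0 ey0 by (simp add: sin_vangle cross_cross_same T_def)
  define F1 where "F1 = face_angle p i j k"
  define F2 where "F2 = face_angle p j i k"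
  define F3 where "F3 = face_angle p k i j"
  define G1 where "G1 = face_angle p i j l"
  define G2 where "G2 = face_angle p j i l"
  define G3 where "G3 = face_angle p l i j"
  have F1v: "F1 = vangle e x" by (simp add: F1_def face_angle_def e_def x_def)
  have F2v: "F2 = vangle (- e) (x - e)" by (simp add: F2_def face_angle_def e_def x_def)
  have F3v: "F3 = vangle (- x) (e - x)" by (simp add: F3_def face_angle_def e_def x_def)
  have G1v: "G1 = vangle e y" by (simp add: G1_def face_angle_def e_def y_def)
  have G2v: "G2 = vangle (- e) (y - e)" by (simp add: G2_def face_angle_def e_def y_def)
  have G3v: "G3 = vangle (- y) (e - y)" by (simp add: G3_def face_angle_def e_def y_def)
  have Fsum: "F1 + F2 + F3 = pi" unfolding F1v F2v F3v by (rule triangle_sum[OF ex0])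
  have Gsum: "G1 + G2 + G3 = pi" unfolding G1v G2v G3v by (rule triangle_sum[OF ey0])
  have sF1: "sin F1 = norm (cross3 e x) / (norm e * norm x)"
    unfolding F1v using e0 x0 by (simp add: sin_vangle)
  have sF2: "sin F2 = norm (cross3 e x) / (norm e * norm (x - e))"
    unfolding F2v using e0 xe0 by (simp add: sin_vangle)
  have sG1: "sin G1 = norm (cross3 e y) / (norm e * norm y)"
    unfolding G1v using e0 y0 by (simp add: sin_vangle)
  have sG2: "sin G2 = norm (cross3 e y) / (norm e * norm (y - e))"
    unfolding G2v using e0 ye0 by (simp add: sin_vangle)
  have Fb: "F1 \<le> \<theta>M" "F2 \<le> \<theta>M" "F3 \<le> \<theta>M" "G1 \<le> \<theta>M" "G2 \<le> \<theta>M" "G3 \<le> \<theta>M"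
    unfolding F1_def F2_def F3_def G1_def G2_def G3_def using idx by (auto intro!: fa)
  have F0: "0 \<le> F1" "0 \<le> F2" "0 \<le> G1" "0 \<le> G2"
    unfolding F1v F2v G1v G2v by (simp_all add: vangle_bounds)
  define s where "s = min (sqrt 3 / 2) (sin \<theta>M)"
  define m where "m = min (cos (\<theta>M / 2)) (sin \<theta>M)"
  have th3: "pi / 3 \<le> \<theta>M" using big da by simp
  have thp: "0 < \<theta>M" using th3 pi_gt_zero by linarith
  have sth: "sin \<theta>M > 0" using thp th by (intro sin_gt_zero)
  have cth: "cos (\<theta>M / 2) > 0" using th3 th by (intro cos_gt_zero_pi) auto
  have s0: "0 \<le> s" using sth by (simp add: s_def)
  have m0: "0 \<le> m" using sth cth by (simp add: m_def)
  have sDb: "s \<le> sin D"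
  proof -
    have "min (sin (pi / 3)) (sin \<theta>M) \<le> sin D"
      using big da th by (intro sin_between) (auto simp: D_def)
    then show ?thesis by (simp add: s_def sin_60)
  qed
  have Fc: "m \<le> sin F1 \<or> m \<le> sin F2"
    unfolding m_def using face_choice[OF Fsum Fb(1-3) F0(1,2) th] .
  have Gc: "m \<le> sin G1 \<or> m \<le> sin G2"
    unfolding m_def using face_choice[OF Gsum Fb(4-6) F0(3,4) th] .
  have le1: "sin D \<le> 1" "sin F1 \<le> 1" "sin F2 \<le> 1" "sin G1 \<le> 1" "sin G2 \<le> 1" by simp_all
  have ne: "norm e > 0" "norm x > 0" "norm y > 0" "norm (x - e) > 0" "norm (y - e) > 0"
      "norm (cross3 e x) > 0" "norm (cross3 e y) > 0"
    using e0 x0 y0 xe0 ye0 ex0 ey0 by simp_all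
  have pd: "p j - p i = e" "p k - p i = x" "p l - p i = y" "p i - p j = - e" "p k - p j = x - e"
    "p l - p j = y - e" "p i - p k = - x" "p i - p l = - y"
    by (simp_all add: e_def x_def y_def)
  have dij: "i \<noteq> j" "i \<noteq> k" "i \<noteq> l" "j \<noteq> k" "j \<noteq> l" "k \<noteq> l" using idx(5) by auto
  have edsame: "ed a b = ed b a" for a b by (simp add: ed_def min.commute max.commute)
  have edne: "ed a b \<noteq> ed c d" if "a \<noteq> c" "a \<noteq> d" for a b c d
    using that by (auto simp: ed_def min_def max_def)
  show ?thesis
  proof (cases "m \<le> sin F1")
    case c1: True
    show ?thesis
    proof (cases "m \<le> sin G1")
      case True
      show ?thesis unfolding s_def[symmetric] m_def[symmetric]
        apply (rule finish[of i j i k i l p e x y "sin D" "sin F1" "sin G1"])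
        using idx dij pd vol c1 True s0 sDb m0 le1 ne
        by (auto simp: edne T_def sD sF1 sG1 field_simps ed_def min_def max_def)
    next
      case False
      then have c2: "m \<le> sin G2" using Gc by simp
      show ?thesis unfolding s_def[symmetric] m_def[symmetric]
        apply (rule finish[of k i i j j l p "- x" e "y - e" "sin D" "sin F1" "sin G2"])
        using idx dij pd vol c1 c2 s0 sDb m0 le1 ne
        by (auto simp: trip_identities(1-3) T_def sD sF1 sG2 field_simps ed_def min_def max_def)
    qed
  next
    case False
    then have c1: "m \<le> sin F2" using Fc by simp
    show ?thesis
    proof (cases "m \<le> sin G1")
      case True
      show ?thesis unfolding s_def[symmetric] m_def[symmetric]
        apply (rule finish[of l i i j j k p "- y" e "x - e" "sin D" "sin G1" "sin F2"])
        using idx dij pd vol c1 True s0 sDb m0 le1 ne trip_swap23[of e y x]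
        by (auto simp: trip_identities(1-3) T_def sD sF2 sG1 field_simps ed_def min_def max_def)
    next
      case False
      then have c2: "m \<le> sin G2" using Gc by simp
      show ?thesis unfolding s_def[symmetric] m_def[symmetric]
        apply (rule finish[of j i j k j l p "- e" "x - e" "y - e" "sin D" "sin F2" "sin G2"])
        using idx dij pd vol c1 c2 s0 sDb m0 le1 ne
        by (auto simp: trip_identities(1-3) T_def sD sF2 sG2 field_simps ed_def min_def max_def)
    qed
  qed
qed


theorem lemmaC2:
  fixes p :: "nat \<Rightarrow> real^3" and \<theta>M :: real
  assumes "tetrahedron p"
    and "max_angle_condition p \<theta>M"
    and "\<theta>M < pi"
  shows "\<exists>e1 e2 e3. is_edge e1 \<and> is_edge e2 \<and> is_edge e3 \<and> distinct [e1, e2, e3] \<and>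
     (let cm = min (sqrt 3 / 2) (sin \<theta>M) * (min (cos (\<theta>M / 2)) (sin \<theta>M))\<^sup>2 in
       \<bar>det (edge_matrix p e1 e2 e3)\<bar> \<ge> cm \<and>
       cm / 6 * (edge_len p e1 * edge_len p e2 * edge_len p e3) \<le> tet_volume p \<and>
       tet_volume p \<le> 1 / 6 * (edge_len p e1 * edge_len p e2 * edge_len p e3))"
proof -
  have nz: "trip (p 1 - p 0) (p 2 - p 0) (p 3 - p 0) \<noteq> 0" by (rule tet_trip_nz[OF assms(1)])
  obtain i j k l where idx: "i < 4" "j < 4" "k < 4" "l < 4" "distinct [i, j, k, l]"
    and big: "pi / 3 \<le> dihedral_angle p i j k l"
    using exists_big_dihedral[OF nz] by blast
  show ?thesis by (rule edge_case[OF nz assms(2) assms(3) idx big])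
qed

end
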